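(* Let $f:\mathbb{R}^d\to\mathbb{R}$, let $p_u:\mathbb{R}^d\to[0,\infty)$, and let $q_+,q_-$ be probability density functions on $\mathbb{R}^d$. Let $n_+,n_-\ge1$ be integers and let $\boldsymbol{x}_{1+},\dots,\boldsymbol{x}_{n_++}$ and $\boldsymbol{x}_{1-},\dots,\boldsymbol{x}_{n_--}$ be points with $q_+(\boldsymbol{x}_{i+})>0$ and $q_-(\boldsymbol{x}_{i-})>0$ (e.g. samples drawn from $q_+$ and $q_-$ respectively). Write $S_+=\{\boldsymbol{x}_{i+}: 1\le i\le n_+\}$, $S_-=\{\boldsymbol{x}_{i-}:1\le i\le n_-\}$, and define for $\mu\in\mathbb{R}$ $$\Psi_{n_+,n_-}(\mu)=\frac1{n_+}\sum_{i=1}^{n_+}\frac{(f(\boldsymbol{x}_{i+})-\mu)_+p_u(\boldsymbol{x}_{i+})}{q_+(\boldsymbol{x}_{i+})}-\frac1{n_-}\sum_{i=1}^{n_-}\frac{(f(\boldsymbol{x}_{i-})-\mu)_-p_u(\boldsymbol{x}_{i-})}{q_-(\boldsymbol{x}_{i-})}.$$ Assume that $\max_{\boldsymbol{x}\in S_+}p_u(\boldsymbol{x})>0$ and $\max_{\boldsymbol{x}\in S_-}p_u(\boldsymbol{x})>0$. Then there exists $\hat\mu\in\mathbb{R}$ with $\Psi_{n_+,n_-}(\hat\mu)=0$. Moreover, let $\overline{f}=\max\{f(\boldsymbol{x}): \boldsymbol{x}\in S_+,\ p_u(\boldsymbol{x})>0\}$ and $\underline{f}=\min\{f(\boldsymbol{x}):\boldsymbol{x}\in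 S_-,\ p_u(\boldsymbol{x})>0\}$. If $\overline{f}>\underline{f}$, then there is at most one solution $\mu$ of $\Psi_{n_+,n_-}(\mu)=0$.
   Context: For $a\in\mathbb{R}$, $(a)_+=\max(a,0)$ and $(a)_-=\max(-a,0)$, so $a=(a)_+-(a)_-$. Here $p_u$ plays the role of an unnormalized probability density. *)

theory Defs
  imports "HOL-Analysis.Analysis"
begin

definition pos_part :: "real \<Rightarrow> real" where
  "pos_part a = max a 0"

definition neg_part :: "real \<Rightarrow> real" where
  "neg_part a = max (- a) 0"

definition prob_density :: "('a::euclidean_space \<Rightarrow> real) \<Rightarrow> bool" where
  "prob_density q \<longleftrightarrow> (\<forall>x. 0 \<le> q x) \<and> q \<in> borel_measurable lborel \<and>
     (\<integral>\<^sup>+ x. ennreal (q x) \<partial>lborel) = 1"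

definition Psi :: "('a \<Rightarrow> real) \<Rightarrow> ('a \<Rightarrow> real) \<Rightarrow> ('a \<Rightarrow> real) \<Rightarrow> ('a \<Rightarrow> real)
    \<Rightarrow> nat \<Rightarrow> nat \<Rightarrow> (nat \<Rightarrow> 'a) \<Rightarrow> (nat \<Rightarrow> 'a) \<Rightarrow> real \<Rightarrow> real" where
  "Psi f pu qp qm np nm xp xm \<mu> =
     (1 / real np) * (\<Sum>i=1..np. pos_part (f (xp i) - \<mu>) * pu (xp i) / qp (xp i))
   - (1 / real nm) * (\<Sum>i=1..nm. neg_part (f (xm i) - \<mu>) * pu (xm i) / qm (xm i))"

end

theory Submission
  imports Defs
begin

lemma Psi_cont: "isCont (\<lambda>\<mu>. Psi f pu qp qm np nm xp xm \<mu>) x"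
  unfolding Psi_def pos_part_def neg_part_def divide_inverse
  by (intro continuous_intros)

lemma sumA_mono:
  fixes w :: "nat \<Rightarrow> real"
  assumes "\<forall>i\<in>I. 0 \<le> w i" "finite I" "\<mu>1 \<le> \<mu>2"
  shows "(\<Sum>i\<in>I. pos_part (g i - \<mu>2) * w i) \<le> (\<Sum>i\<in>I. pos_part (g i - \<mu>1) * w i)"
  using assms by (intro sum_mono mult_right_mono) (auto simp: pos_part_def)

lemma sumA_strict:
  fixes w :: "nat \<Rightarrow> real"
  assumes "\<forall>i\<in>I. 0 \<le> w i" "finite I" "\<mu>1 < \<mu>2" "k \<in> I" "w k > 0" "g k > \<mu>1"
  shows "(\<Sum>i\<in>I. pos_part (g i - \<mu>2) * w i) < (\<Sum>i\<in>I. pos_part (g i - \<mu>1) * w i)"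
proof (rule sum_strict_mono_ex1)
  show "finite I" by fact
  show "\<forall>i\<in>I. pos_part (g i - \<mu>2) * w i \<le> pos_part (g i - \<mu>1) * w i"
    using assms by (auto intro!: mult_right_mono simp: pos_part_def)
  have "pos_part (g k - \<mu>2) < pos_part (g k - \<mu>1)" using assms by (auto simp: pos_part_def)
  then show "\<exists>a\<in>I. pos_part (g a - \<mu>2) * w a < pos_part (g a - \<mu>1) * w a"
    using assms by (intro bexI[of _ k]) auto
qed

lemma sumB_mono:
  fixes w :: "nat \<Rightarrow> real"
  assumes "\<forall>i\<in>I. 0 \<le> w i" "finite I" "\<mu>1 \<le> \<mu>2"
  shows "(\<Sum>i\<in>I. neg_part (g i - \<mu>1) * w i) \<le> (\<Sum>i\<in>I. neg_part (g i - \<mu>2) * w i)"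
  using assms by (intro sum_mono mult_right_mono) (auto simp: neg_part_def)

lemma sumB_strict:
  fixes w :: "nat \<Rightarrow> real"
  assumes "\<forall>i\<in>I. 0 \<le> w i" "finite I" "\<mu>1 < \<mu>2" "k \<in> I" "w k > 0" "g k < \<mu>2"
  shows "(\<Sum>i\<in>I. neg_part (g i - \<mu>1) * w i) < (\<Sum>i\<in>I. neg_part (g i - \<mu>2) * w i)"
proof (rule sum_strict_mono_ex1)
  show "finite I" by fact
  show "\<forall>i\<in>I. neg_part (g i - \<mu>1) * w i \<le> neg_part (g i - \<mu>2) * w i"
    using assms by (auto intro!: mult_right_mono simp: neg_part_def)
  have "neg_part (g k - \<mu>1) < neg_part (g k - \<mu>2)" using assms by (auto simp: neg_part_def)
  then show "\<exists>a\<in>I. neg_part (g a - \<mu>1) * w a < neg_part (g a - \<mu>2) * w a"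
    using assms by (intro bexI[of _ k]) auto
qed

theorem proposition1:
  fixes f pu qp qm :: "real ^ 'd \<Rightarrow> real"
    and np nm :: nat
    and xp xm :: "nat \<Rightarrow> real ^ 'd"
  assumes pu_nonneg: "\<forall>x. 0 \<le> pu x"
    and qp_dens: "prob_density qp" and qm_dens: "prob_density qm"
    and np_ge: "np \<ge> 1" and nm_ge: "nm \<ge> 1"
    and qp_pos: "\<forall>i\<in>{1..np}. qp (xp i) > 0"
    and qm_pos: "\<forall>i\<in>{1..nm}. qm (xm i) > 0"
    and max_p: "Max (pu ` (xp ` {1..np})) > 0"
    and max_m: "Max (pu ` (xm ` {1..nm})) > 0"
  shows "(\<exists>\<mu>. Psi f pu qp qm np nm xp xm \<mu> = 0) \<and>
         (Max (f ` {x \<in> xp ` {1..np}. pu x > 0}) > Min (f ` {x \<in> xm ` {1..nm}. pu x > 0}) \<longrightarrow>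
            (\<forall>\<mu>1 \<mu>2. Psi f pu qp qm np nm xp xm \<mu>1 = 0 \<and> Psi f pu qp qm np nm xp xm \<mu>2 = 0
                \<longrightarrow> \<mu>1 = \<mu>2))"
proof -
  define wp where "wp i = pu (xp i) / qp (xp i)" for i
  define wm where "wm i = pu (xm i) / qm (xm i)" for i
  have wp_nn: "\<forall>i\<in>{1..np}. 0 \<le> wp i" using pu_nonneg qp_pos
    by (auto simp: wp_def less_imp_le)
  have wm_nn: "\<forall>i\<in>{1..nm}. 0 \<le> wm i" using pu_nonneg qm_pos
    by (auto simp: wm_def less_imp_le)
  have PsiE: "Psi f pu qp qm np nm xp xm \<mu> =
     (1 / real np) * (\<Sum>i=1..np. pos_part (f (xp i) - \<mu>) * wp i)
   - (1 / real nm) * (\<Sum>i=1..nm. neg_part (f (xm i) - \<mu>) * wm i)" for \<mu>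
    unfolding Psi_def wp_def wm_def by (simp add: times_divide_eq_right)
  define S where "S = f ` (xp ` {1..np} \<union> xm ` {1..nm})"
  have Sfin: "finite S" "S \<noteq> {}" using np_ge by (auto simp: S_def)
  define L where "L = Min S - 1"
  define U where "U = Max S + 1"
  have LU: "L \<le> U"
  proof -
    obtain s where "s \<in> S" using Sfin by auto
    then have "Min S \<le> s" "s \<le> Max S" using Sfin by auto
    then show ?thesis unfolding L_def U_def by linarith
  qed
  have PL: "Psi f pu qp qm np nm xp xm L \<ge> 0"
  proof -
    have "f (xm i) - L > 0" if "i \<in> {1..nm}" for i
    proof -
      have "f (xm i) \<in> S" using that by (auto simp: S_def)
      then have "Min S \<le> f (xm i)" using Sfin by simp
      then show ?thesis unfolding L_def by linarith
    qed
    then have "(\<Sum>i=1..nm. neg_part (f (xm i) - L) * wm i) = 0"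
      by (intro sum.neutral) (auto simp: neg_part_def)
    moreover have "(\<Sum>i=1..np. pos_part (f (xp i) - L) * wp i) \<ge> 0"
      using wp_nn by (intro sum_nonneg) (auto simp: pos_part_def)
    ultimately show ?thesis unfolding PsiE by simp
  qed
  have PU: "Psi f pu qp qm np nm xp xm U \<le> 0"
  proof -
    have "f (xp i) - U < 0" if "i \<in> {1..np}" for i
    proof -
      have "f (xp i) \<in> S" using that by (auto simp: S_def)
      then have "Max S \<ge> f (xp i)" using Sfin by simp
      then show ?thesis unfolding U_def by linarith
    qed
    then have "(\<Sum>i=1..np. pos_part (f (xp i) - U) * wp i) = 0"
      by (intro sum.neutral) (auto simp: pos_part_def)
    moreover have "(\<Sum>i=1..nm. neg_part (f (xm i) - U) * wm i) \<ge> 0"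
      using wm_nn by (intro sum_nonneg) (auto simp: neg_part_def)
    ultimately show ?thesis unfolding PsiE by simp
  qed
  have ex: "\<exists>\<mu>. Psi f pu qp qm np nm xp xm \<mu> = 0"
    using IVT2[of "\<lambda>\<mu>. Psi f pu qp qm np nm xp xm \<mu>" U 0 L, OF PU PL LU] Psi_cont by blast
  have uniq: "\<mu>1 = \<mu>2"
    if gt: "Max (f ` {x \<in> xp ` {1..np}. pu x > 0}) > Min (f ` {x \<in> xm ` {1..nm}. pu x > 0})"
      and z1: "Psi f pu qp qm np nm xp xm \<mu>1 = 0" and z2: "Psi f pu qp qm np nm xp xm \<mu>2 = 0"
      and lt: "\<mu>1 < \<mu>2" for \<mu>1 \<mu>2
  proof -
    define Sp where "Sp = {x \<in> xp ` {1..np}. pu x > 0}"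
    define Sm where "Sm = {x \<in> xm ` {1..nm}. pu x > 0}"
    have "Max (pu ` (xp ` {1..np})) \<in> pu ` (xp ` {1..np})"
      using np_ge by (intro Max_in) auto
    then have "Sp \<noteq> {}" using max_p by (auto simp: Sp_def)
    then have "Max (f ` Sp) \<in> f ` Sp" unfolding Sp_def by (intro Max_in) auto
    then obtain k where k: "k \<in> {1..np}" "pu (xp k) > 0" "f (xp k) = Max (f ` Sp)"
      unfolding Sp_def by auto
    have "Max (pu ` (xm ` {1..nm})) \<in> pu ` (xm ` {1..nm})"
      using nm_ge by (intro Max_in) auto
    then have "Sm \<noteq> {}" using max_m by (auto simp: Sm_def)
    then have "Min (f ` Sm) \<in> f ` Sm" unfolding Sm_def by (intro Min_in) auto
    then obtain j where j: "j \<in> {1..nm}" "pu (xm j) > 0" "f (xm j) = Min (f ` Sm)"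
      unfolding Sm_def by auto
    have wk: "wp k > 0" using k qp_pos by (auto simp: wp_def)
    have wj: "wm j > 0" using j qm_pos by (auto simp: wm_def)
    have fjk: "f (xp k) > f (xm j)" using gt k j unfolding Sp_def Sm_def by simp
    have A: "(\<Sum>i=1..np. pos_part (f (xp i) - \<mu>2) * wp i) \<le> (\<Sum>i=1..np. pos_part (f (xp i) - \<mu>1) * wp i)"
      using wp_nn lt by (intro sumA_mono) auto
    have B: "(\<Sum>i=1..nm. neg_part (f (xm i) - \<mu>1) * wm i) \<le> (\<Sum>i=1..nm. neg_part (f (xm i) - \<mu>2) * wm i)"
      using wm_nn lt by (intro sumB_mono) auto
    have np0: "real np > 0" "real nm > 0" using np_ge nm_ge by auto
    have "Psi f pu qp qm np nm xp xm \<mu>2 < Psi f pu qp qm np nm xp xm \<mu>1"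
    proof (cases "f (xp k) > \<mu>1")
      case True
      have "(\<Sum>i=1..np. pos_part (f (xp i) - \<mu>2) * wp i) < (\<Sum>i=1..np. pos_part (f (xp i) - \<mu>1) * wp i)"
        using wp_nn lt k wk True by (intro sumA_strict[where k=k]) auto
      then have "(1 / real np) * (\<Sum>i=1..np. pos_part (f (xp i) - \<mu>2) * wp i) < (1 / real np) * (\<Sum>i=1..np. pos_part (f (xp i) - \<mu>1) * wp i)"
        using np0 by (intro mult_strict_left_mono) auto
      moreover have "(1 / real nm) * (\<Sum>i=1..nm. neg_part (f (xm i) - \<mu>1) * wm i) \<le> (1 / real nm) * (\<Sum>i=1..nm. neg_part (f (xm i) - \<mu>2) * wm i)"
        using B np0 by (intro mult_left_mono) auto
      ultimately show ?thesis unfolding PsiE by linarith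
    next
      case False
      then have "f (xm j) < \<mu>2" using fjk lt by linarith
      then have "(\<Sum>i=1..nm. neg_part (f (xm i) - \<mu>1) * wm i) < (\<Sum>i=1..nm. neg_part (f (xm i) - \<mu>2) * wm i)"
        using wm_nn lt j wj by (intro sumB_strict[where k=j]) auto
      then have "(1 / real nm) * (\<Sum>i=1..nm. neg_part (f (xm i) - \<mu>1) * wm i) < (1 / real nm) * (\<Sum>i=1..nm. neg_part (f (xm i) - \<mu>2) * wm i)"
        using np0 by (intro mult_strict_left_mono) auto
      moreover have "(1 / real np) * (\<Sum>i=1..np. pos_part (f (xp i) - \<mu>2) * wp i) \<le> (1 / real np) * (\<Sum>i=1..np. pos_part (f (xp i) - \<mu>1) * wp i)"
        using A np0 by (intro mult_left_mono) auto
      ultimately show ?thesis unfolding PsiE by linarith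
    qed
    then show ?thesis using z1 z2 by simp
  qed
  show ?thesis
  proof (intro conjI impI allI)
    show "\<exists>\<mu>. Psi f pu qp qm np nm xp xm \<mu> = 0" by (rule ex)
  next
    fix \<mu>1 \<mu>2
    assume gt: "Max (f ` {x \<in> xp ` {1..np}. pu x > 0}) > Min (f ` {x \<in> xm ` {1..nm}. pu x > 0})"
      and z: "Psi f pu qp qm np nm xp xm \<mu>1 = 0 \<and> Psi f pu qp qm np nm xp xm \<mu>2 = 0"
    show "\<mu>1 = \<mu>2"
    proof (cases "\<mu>1 < \<mu>2")
      case True
      then show ?thesis using uniq[OF gt] z by blast
    next
      case False
      show ?thesis
      proof (cases "\<mu>2 < \<mu>1")
        case True
        then show ?thesis using uniq[OF gt] z by (metis)
      next
        case False
        then show ?thesis using \<open>\<not> \<mu>1 < \<mu>2\<close> by linarith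
      qed
    qed
  qed
qed

end
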